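(* Let $r \ge 2$, $t \ge 2$ and $k \ge 1$ be integers, and let $G$ be a graph on $n$ vertices with $n > (r-1)(t-1)k$. Set $x = \lceil n/(r-1) \rceil$ and suppose $$\delta(G) \ge n - x + \left\lfloor \frac{x}{k+1} \right\rfloor$$ (equivalently, $\delta(G) \ge n - \lceil \frac{k}{k+1} x\rceil$). Suppose the edges of $G$ are coloured red and blue so that there is no blue path on $t$ vertices, and let $R$ be the spanning subgraph of $G$ formed by the red edges. Then the independence number of $R$ satisfies $\alpha(R) \le x-1$; that is, every set of $x$ vertices of $G$ contains two vertices joined by a red edge.
   Context: $\delta(G)$ is the minimum degree of $G$; $\alpha(R)$ is the maximum size of a set of pairwise non-adjacent vertices in $R$. A blue path on $t$ vertices means a path with $t$ vertices all of whose edges are blue edges of $G$. *)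

theory Defs
  imports Complex_Main
begin

definition simple_graph :: "'a set \<Rightarrow> ('a \<Rightarrow> 'a \<Rightarrow> bool) \<Rightarrow> bool" where
  "simple_graph V E \<longleftrightarrow> finite V \<and> (\<forall>u v. E u v \<longrightarrow> u \<in> V \<and> v \<in> V \<and> u \<noteq> v \<and> E v u)"

definition degree :: "'a set \<Rightarrow> ('a \<Rightarrow> 'a \<Rightarrow> bool) \<Rightarrow> 'a \<Rightarrow> nat" where
  "degree V E v = card {u \<in> V. E v u}"

definition min_degree :: "'a set \<Rightarrow> ('a \<Rightarrow> 'a \<Rightarrow> bool) \<Rightarrow> nat" where
  "min_degree V E = Min (degree V E ` V)"

definition independent_set :: "('a \<Rightarrow> 'a \<Rightarrow> bool) \<Rightarrow> 'a set \<Rightarrow> bool" where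
  "independent_set E S \<longleftrightarrow> (\<forall>u\<in>S. \<forall>v\<in>S. \<not> E u v)"

definition independence_number :: "'a set \<Rightarrow> ('a \<Rightarrow> 'a \<Rightarrow> bool) \<Rightarrow> nat" where
  "independence_number V E = Max (card ` {S. S \<subseteq> V \<and> independent_set E S})"

definition has_path_on :: "'a set \<Rightarrow> ('a \<Rightarrow> 'a \<Rightarrow> bool) \<Rightarrow> nat \<Rightarrow> bool" where
  "has_path_on V P t \<longleftrightarrow> (\<exists>ps. length ps = t \<and> distinct ps \<and> set ps \<subseteq> V \<and>
      (\<forall>i. i + 1 < t \<longrightarrow> P (ps ! i) (ps ! (i + 1))))"

end

theory Submission
  imports Defs
begin

definition cyc :: "('a \<Rightarrow> 'a \<Rightarrow> bool) \<Rightarrow> 'a list \<Rightarrow> bool" where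
  "cyc H c \<longleftrightarrow> successively H c \<and> H (last c) (hd c)"

lemma cyc_rotate1:
  assumes "c \<noteq> []" "cyc H c" shows "cyc H (rotate1 c)"
proof (cases c)
  case Nil then show ?thesis using assms by simp
next
  case (Cons a xs)
  show ?thesis
  proof (cases "xs = []")
    case True then show ?thesis using assms Cons by simp
  next
    case False
    then show ?thesis using assms Cons
      by (auto simp: cyc_def successively_append_iff successively_Cons)
  qed
qed

lemma cyc_rotate:
  assumes "c \<noteq> []" "cyc H c" shows "cyc H (rotate n c)"
  proof (induction n)
  case (Suc n)
  have "rotate n c \<noteq> []" using assms(1) by simp
  then show ?case using cyc_rotate1[OF _ Suc.IH] by simp
qed (use assms in simp)

lemma longest:
  assumes "finite S" "Q [a]" "\<And>ps. Q ps \<Longrightarrow> distinct ps \<and> set ps \<subseteq> S"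
  shows "\<exists>ps. Q ps \<and> (\<forall>qs. Q qs \<longrightarrow> length qs \<le> length ps)"
proof -
  define P where "P = (\<lambda>m. \<exists>ps. Q ps \<and> length ps = m)"
  have 1: "P 1" using assms(2) unfolding P_def by force
  have 2: "\<forall>y. P y \<longrightarrow> y \<le> card S"
      using assms(1,3) unfolding P_def by (metis card_mono distinct_card)
  obtain m where "P m" "\<forall>y. P y \<longrightarrow> y \<le> m" using Nat.ex_has_greatest_nat[OF 1 2] by blast
  then show ?thesis unfolding P_def by blast
qed

lemma closed_piece:
  fixes H :: "'a \<Rightarrow> 'a \<Rightarrow> bool"
  assumes sym: "\<forall>u v. H u v \<longrightarrow> H v u" and irr: "\<forall>u. \<not> H u u"
    and fin: "finite S" and ne: "S \<noteq> {}"
    and deg: "\<forall>v\<in>S. d \<le> card {u\<in>S. H v u}"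
    and nop: "\<forall>ps. distinct ps \<and> set ps \<subseteq> S \<and> successively H ps \<longrightarrow> length ps < t"
    and td: "t \<le> 2*d+1"
  shows "\<exists>T\<subseteq>S. T \<noteq> {} \<and> card T < t \<and> (\<forall>u\<in>T. \<forall>w\<in>S. H u w \<longrightarrow> w \<in> T)"
proof -
  define Q where "Q = (\<lambda>ps. distinct ps \<and> set ps \<subseteq> S \<and> successively H ps)"
  obtain a where a: "a \<in> S" using ne by blast
  have Qa: "Q [a]" using a by (simp add: Q_def)
  obtain ps where Qps: "Q ps" and mx: "\<forall>qs. Q qs \<longrightarrow> length qs \<le> length ps"
    using longest[of S Q a, OF fin Qa] by (auto simp: Q_def)
  define p where "p = length ps"
  have pt: "p < t" using Qps nop unfolding Q_def p_def by blast
  have p1: "p \<ge> 1" using mx Qa p_def by fastforce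
  have dist: "distinct ps" and setS: "set ps \<subseteq> S" and suc: "successively H ps"
    using Qps Q_def by auto
  have ne_ps: "ps \<noteq> []" using p1 p_def by auto
  have A: "\<forall>w\<in>S. H (hd ps) w \<longrightarrow> w \<in> set ps"
  proof (intro ballI impI, rule ccontr)
    fix w assume "w\<in>S" "H (hd ps) w" "w \<notin> set ps"
    then have "Q (w#ps)" using Qps ne_ps sym by (auto simp: Q_def successively_Cons)
    then show False using mx p_def by fastforce
  qed
  have B: "\<forall>w\<in>S. H (last ps) w \<longrightarrow> w \<in> set ps"
  proof (intro ballI impI, rule ccontr)
    fix w assume "w\<in>S" "H (last ps) w" "w \<notin> set ps"
    then have "Q (ps@[w])" using Qps ne_ps sym by (auto simp: Q_def successively_append_iff)
    then show False using mx p_def by fastforce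
  qed
  show ?thesis
  proof (cases "p = 1")
    case True
    then obtain b where b: "ps = [b]" using p_def by (cases ps) auto
    show ?thesis using A setS pt b True by (intro exI[of _ "{b}"]) auto
  next
    case False
    hence p2: "p \<ge> 2" using p1 by simp
    define IA where "IA = {i. i < p-1 \<and> H (ps!0) (ps!(i+1))}"
    define IB where "IB = {i. i < p-1 \<and> H (ps!i) (ps!(p-1))}"
    have finIA: "finite IA" and finIB: "finite IB" unfolding IA_def IB_def by auto
    have ps0S: "ps!0 \<in> S" using setS p1 p_def by (metis One_nat_def Suc_le_eq nth_mem subsetD)
    have pslS: "ps!(p-1) \<in> S" using setS p1 p_def by (metis diff_less nth_mem subsetD zero_less_one less_le_trans)
    have subA: "{u\<in>S. H (ps!0) u} \<subseteq> (\<lambda>i. ps!(i+1)) ` IA"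
    proof
      fix u assume u: "u \<in> {u\<in>S. H (ps!0) u}"
      then have "u \<in> set ps" using A hd_conv_nth[OF ne_ps] by auto
      then obtain j where j: "j < p" "ps!j = u" using p_def by (auto simp: in_set_conv_nth)
      have "j \<noteq> 0" using j u irr by (metis (mono_tags) mem_Collect_eq)
      then have "j - 1 \<in> IA" "ps!((j-1)+1) = u" using j u IA_def by auto
      then show "u \<in> (\<lambda>i. ps!(i+1)) ` IA" by force
    qed
    have subB: "{u\<in>S. H (ps!(p-1)) u} \<subseteq> (\<lambda>i. ps!i) ` IB"
    proof
      fix u assume u: "u \<in> {u\<in>S. H (ps!(p-1)) u}"
      then have "u \<in> set ps" using B last_conv_nth[OF ne_ps] p_def by auto
      then obtain j where j: "j < p" "ps!j = u" using p_def by (auto simp: in_set_conv_nth)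
      have "j \<noteq> p-1" using j u irr by (metis (mono_tags) mem_Collect_eq)
      then have "j \<in> IB" using j u sym IB_def by auto
      then show "u \<in> (\<lambda>i. ps!i) ` IB" using j by force
    qed
    have cA: "d \<le> card IA"
    proof -
      have "d \<le> card {u\<in>S. H (ps!0) u}" using deg ps0S by blast
      also have "\<dots> \<le> card ((\<lambda>i. ps!(i+1)) ` IA)" using subA finIA by (intro card_mono) auto
      also have "\<dots> \<le> card IA" using card_image_le finIA by blast
      finally show ?thesis .
    qed
    have cB: "d \<le> card IB"
    proof -
      have "d \<le> card {u\<in>S. H (ps!(p-1)) u}" using deg pslS by blast
      also have "\<dots> \<le> card ((\<lambda>i. ps!i) ` IB)" using subB finIB by (intro card_mono) auto
      also have "\<dots> \<le> card IB" using card_image_le finIB by blast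
      finally show ?thesis .
    qed
    have "IA \<union> IB \<subseteq> {..<p-1}" unfolding IA_def IB_def by auto
    hence "card (IA \<union> IB) \<le> p-1" by (metis card_lessThan card_mono finite_lessThan)
    moreover have "card IA + card IB = card (IA\<union>IB) + card (IA\<inter>IB)"
      using card_Un_Int finIA finIB by blast
    ultimately have "card (IA \<inter> IB) > 0" using cA cB pt td p1 by linarith
    then obtain i where "i \<in> IA \<inter> IB" by (metis card.empty ex_in_conv less_irrefl)
    then have i: "i < p-1" "H (ps!0) (ps!(i+1))" "H (ps!i) (ps!(p-1))"
      unfolding IA_def IB_def by auto
    define c where "c = take (i+1) ps @ rev (drop (i+1) ps)"
    have c_set: "set c = set ps" unfolding c_def
      by (metis set_append set_rev append_take_drop_id)
    have c_ne: "c \<noteq> []" using ne_ps c_set by auto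
    have c_dist: "distinct c" unfolding c_def using dist
      by (metis append_take_drop_id distinct_append distinct_rev set_rev)
    have suc2: "successively H (take (i+1) ps)" "successively H (drop (i+1) ps)"
      using suc by (metis append_take_drop_id successively_append_iff)+
    have suc3: "successively H (rev (drop (i+1) ps))"
      using suc2(2) sym by (auto intro: successively_mono)
    have lt: "last (take (i+1) ps) = ps!i" using i p_def
      by (simp add: take_Suc_conv_app_nth)
    have hdr: "hd (rev (drop (i+1) ps)) = ps!(p-1)" using i p_def ne_ps
    proof -
      have "hd (rev (drop (i+1) ps)) = last (drop (i+1) ps)" by (simp add: hd_rev)
      also have "\<dots> = last ps" using i p_def by (intro last_drop) simp
      also have "\<dots> = ps!(p-1)" using ne_ps p_def by (simp add: last_conv_nth)
      finally show ?thesis .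
    qed
    have lr: "last (rev (drop (i+1) ps)) = ps!(i+1)" using i p_def
      by (simp add: last_rev hd_drop_conv_nth)
    have dne: "drop (i+1) ps \<noteq> []" using i p_def by simp
    have tne: "take (i+1) ps \<noteq> []" using ne_ps by simp
    have hc: "hd c = ps!0" unfolding c_def using tne ne_ps by (simp add: hd_conv_nth[symmetric])
    have lc: "last c = ps!(i+1)" unfolding c_def using dne lr by simp
    have sc: "successively H c" unfolding c_def
      using suc2(1) suc3 lt hdr dne tne i by (simp add: successively_append_iff)
    have cyc: "cyc H c" unfolding cyc_def using sc hc lc i sym by metis
    show ?thesis
    proof (intro exI[of _ "set ps"] conjI ballI impI)
      show "set ps \<subseteq> S" by (rule setS)
      show "set ps \<noteq> {}" using ne_ps by simp
      show "card (set ps) < t" using pt dist p_def by (simp add: distinct_card)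
    next
      fix u w assume u: "u \<in> set ps" and w: "w \<in> S" and uw: "H u w"
      show "w \<in> set ps"
      proof (rule ccontr)
        assume wn: "w \<notin> set ps"
        obtain j where j: "j < length c" "c!j = u" using u c_set by (metis in_set_conv_nth)
        define c' where "c' = rotate j c"
        have "hd c' = u" unfolding c'_def using hd_rotate_conv_nth[OF c_ne] j by simp
        moreover have "cyc H c'" unfolding c'_def using cyc_rotate[OF c_ne cyc] .
        moreover have "set c' = set ps" "distinct c'" "c' \<noteq> []"
          unfolding c'_def using c_set c_dist c_ne by auto
        ultimately have "Q (w#c')" using wn w uw sym setS
          by (auto simp: Q_def cyc_def successively_Cons)
        moreover have "length c' = p" unfolding c'_def c_def using i p_def by simp
        ultimately show False using mx p_def by fastforce
      qed
    qed
  qed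
qed


lemma partition:
  fixes H :: "'a \<Rightarrow> 'a \<Rightarrow> bool"
  assumes sym: "\<forall>u v. H u v \<longrightarrow> H v u" and irr: "\<forall>u. \<not> H u u"
    and td: "t \<le> 2*d+1"
  shows "finite S \<Longrightarrow> \<forall>v\<in>S. d \<le> card {u\<in>S. H v u} \<Longrightarrow>
    \<forall>ps. distinct ps \<and> set ps \<subseteq> S \<and> successively H ps \<longrightarrow> length ps < t \<Longrightarrow>
    \<exists>m. m*(d+1) \<le> card S \<and> card S \<le> m*(t-1)"
proof (induction "card S" arbitrary: S rule: less_induct)
  case less
  show ?case
  proof (cases "S = {}")
    case True then show ?thesis by (intro exI[of _ 0]) auto
  next
    case False
    obtain T where T: "T \<subseteq> S" "T \<noteq> {}" "card T < t" "\<forall>u\<in>T. \<forall>w\<in>S. H u w \<longrightarrow> w \<in> T"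
      using closed_piece[OF sym irr less.prems(1) False less.prems(2) less.prems(3) td] by blast
    define S' where "S' = S - T"
    have finT: "finite T" using T(1) less.prems(1) finite_subset by blast
    have cT0: "card T > 0" using finT T(2) by (simp add: card_gt_0_iff)
    have cS: "card S = card T + card S'" unfolding S'_def
      using card_Diff_subset[OF finT T(1)] card_mono[OF less.prems(1) T(1)] by simp
    have lt: "card S' < card S" using cS cT0 by simp
    have finS': "finite S'" using less.prems(1) S'_def by simp
    have deg': "\<forall>v\<in>S'. d \<le> card {u\<in>S'. H v u}"
    proof
      fix v assume v: "v \<in> S'"
      have "{u\<in>S'. H v u} = {u\<in>S. H v u}" using v T(4) sym unfolding S'_def by blast
      then show "d \<le> card {u\<in>S'. H v u}" using v less.prems(2) unfolding S'_def by auto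
    qed
    have nop': "\<forall>ps. distinct ps \<and> set ps \<subseteq> S' \<and> successively H ps \<longrightarrow> length ps < t"
      using less.prems(3) unfolding S'_def by blast
    obtain m' where m': "m'*(d+1) \<le> card S'" "card S' \<le> m'*(t-1)"
      using less.hyps[OF lt finS' deg' nop'] by blast
    obtain u where u: "u \<in> T" using T(2) by blast
    have "{w\<in>S. H u w} \<subseteq> T - {u}" using T(4) u irr by blast
    hence "card {w\<in>S. H u w} \<le> card (T - {u})" using finT by (intro card_mono) auto
    moreover have "d \<le> card {w\<in>S. H u w}" using less.prems(2) u T(1) by blast
    ultimately have "d + 1 \<le> card T" using u finT cT0 by simp
    then show ?thesis using m' cS T(3) by (intro exI[of _ "Suc m'"]) auto
  qed
qed


lemma arith_td:
  fixes x k t :: nat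
  assumes "k \<ge> 1" "x > (t-1)*k"
  shows "t \<le> 2*(x div (k+1)) + 1"
proof (rule ccontr)
  define q where "q = x div (k+1)"
  assume "\<not> t \<le> 2*(x div (k+1)) + 1"
  hence "t - 1 \<ge> 2*q+1" unfolding q_def by simp
  hence "(t-1)*k \<ge> (2*q+1)*k" by (intro mult_le_mono1)
  moreover have "q*k \<ge> q" using assms(1) by simp
  moreover have "x = q*(k+1) + x mod (k+1)" unfolding q_def by (metis div_mult_mod_eq)
  moreover have "x mod (k+1) \<le> k" by (metis less_Suc_eq_le mod_less_divisor zero_less_Suc Suc_eq_plus1)
  moreover have "(2*q+1)*k = 2*(q*k) + k" "q*(k+1) = q*k + q" by (simp_all add: algebra_simps)
  ultimately show False using assms(2) by linarith
qed

lemma arith_final: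
  fixes x k t m d :: nat
  assumes "k \<ge> 1" "x > (t-1)*k" "d = x div (k+1)" "m*(d+1) \<le> x" "x \<le> m*(t-1)"
  shows False
proof -
  have "m > k"
  proof (rule ccontr)
    assume "\<not> m > k"
    hence "m \<le> k" by simp
    hence "m*(t-1) \<le> k*(t-1)" by (rule mult_le_mono1)
    moreover have "k*(t-1) = (t-1)*k" by simp
    ultimately show False using assms(2,5) by linarith
  qed
  hence "(k+1)*(d+1) \<le> m*(d+1)" by (intro mult_le_mono1) simp
  moreover have "x = d*(k+1) + x mod (k+1)" using assms(3) by (metis div_mult_mod_eq)
  moreover have "x mod (k+1) < k+1" by simp
  moreover have "(k+1)*(d+1) = d*(k+1) + (k+1)" by (simp add: algebra_simps)
  ultimately show False using assms(4) by linarith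
qed

theorem mainTheorem3:
  fixes V :: "'a set" and E blue :: "'a \<Rightarrow> 'a \<Rightarrow> bool" and r t k n x :: nat
  assumes "simple_graph V E"
    and "r \<ge> 2" and "t \<ge> 2" and "k \<ge> 1"
    and "card V = n"
    and "n > (r - 1) * (t - 1) * k"
    and "x = nat \<lceil>real n / real (r - 1)\<rceil>"
    and "min_degree V E \<ge> n - x + x div (k + 1)"
    and blue_sub: "\<forall>u v. blue u v \<longrightarrow> E u v"
    and blue_sym: "\<forall>u v. blue u v \<longrightarrow> blue v u"
    and "\<not> has_path_on V blue t"
  shows "independence_number V (\<lambda>u v. E u v \<and> \<not> blue u v) \<le> x - 1"
proof -
  have finV: "finite V" using assms(1) unfolding simple_graph_def by blast
  have irr: "\<forall>u. \<not> blue u u" using blue_sub assms(1) unfolding simple_graph_def by blast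
  define d where "d = x div (k+1)"
  have r1: "real (r-1) > 0" using assms(2) by simp
  have "real n / real (r-1) \<le> real x"
  proof -
    have "real n / real (r-1) \<le> of_int \<lceil>real n / real (r - 1)\<rceil>" by (rule le_of_int_ceiling)
    also have "\<dots> = real x" using assms(7) r1 by (simp add: divide_nonneg_nonneg)
    finally show ?thesis .
  qed
  hence "real n \<le> real x * real (r-1)" using r1 by (simp add: divide_le_eq)
  hence nx: "n \<le> (r-1) * x" by (metis of_nat_le_iff of_nat_mult mult.commute)
  have xbig: "x > (t-1)*k"
  proof -
    have "(r-1)*((t-1)*k) = (r-1)*(t-1)*k" by (simp add: mult.assoc)
    hence "(r-1)*((t-1)*k) < (r-1)*x" using nx assms(6) by linarith
    thus ?thesis using mult_less_cancel1 by blast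
  qed
  have x1: "x \<ge> 1" using xbig by simp
  have td: "t \<le> 2*d+1" unfolding d_def using arith_td[OF assms(4) xbig] .
  have bound: "card S \<le> x - 1" if S: "S \<subseteq> V" "independent_set (\<lambda>u v. E u v \<and> \<not> blue u v) S" for S
  proof (rule ccontr)
    assume "\<not> card S \<le> x - 1"
    hence "x \<le> card S" by simp
    then obtain S0 where S0: "S0 \<subseteq> S" "card S0 = x" "finite S0" by (rule obtain_subset_with_card_n)
    have S0V: "S0 \<subseteq> V" using S0 S by blast
    have ind: "\<forall>u\<in>S0. \<forall>v\<in>S0. E u v \<longrightarrow> blue u v"
      using S(2) S0(1) unfolding independent_set_def by blast
    have deg: "\<forall>v\<in>S0. d \<le> card {u\<in>S0. blue v u}"
    proof
      fix v assume v: "v \<in> S0"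
      have "min_degree V E \<le> degree V E v"
        unfolding min_degree_def using finV v S0V by (intro Min_le) auto
      also have "\<dots> = card {u\<in>V. E v u}" by (simp add: degree_def)
      also have "\<dots> \<le> card ((V - S0) \<union> {u\<in>S0. blue v u})"
        using finV S0(3) ind v by (intro card_mono) auto
      also have "\<dots> \<le> card (V - S0) + card {u\<in>S0. blue v u}" by (rule card_Un_le)
      also have "card (V - S0) = n - x" using card_Diff_subset[OF S0(3) S0V] S0(2) assms(5) by simp
      finally show "d \<le> card {u\<in>S0. blue v u}" using assms(8) unfolding d_def by linarith
    qed
    have nop: "\<forall>ps. distinct ps \<and> set ps \<subseteq> S0 \<and> successively blue ps \<longrightarrow> length ps < t"
    proof (intro allI impI, rule ccontr)
      fix ps assume ps: "distinct ps \<and> set ps \<subseteq> S0 \<and> successively blue ps" and "\<not> length ps < t"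
      hence lt: "t \<le> length ps" by simp
      have "has_path_on V blue t" unfolding has_path_on_def
      proof (intro exI[of _ "take t ps"] conjI allI impI)
        show "length (take t ps) = t" using lt by simp
        show "distinct (take t ps)" using ps by simp
        show "set (take t ps) \<subseteq> V" using ps S0V set_take_subset by fastforce
        fix i assume i: "i + 1 < t"
        then show "blue (take t ps ! i) (take t ps ! (i + 1))"
          using ps lt successively_nth[of blue ps i] by simp
      qed
      thus False using assms(11) by blast
    qed
    obtain m where m: "m*(d+1) \<le> card S0" "card S0 \<le> m*(t-1)"
      using partition[OF blue_sym irr td S0(3) deg nop] by blast
    show False using arith_final[OF assms(4) xbig d_def] m S0(2) by simp
  qed
  have fin: "finite (card ` {S. S \<subseteq> V \<and> independent_set (\<lambda>u v. E u v \<and> \<not> blue u v) S})"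
    using finV by simp
  have ne: "{} \<in> {S. S \<subseteq> V \<and> independent_set (\<lambda>u v. E u v \<and> \<not> blue u v) S}"
    by (simp add: independent_set_def)
  show ?thesis unfolding independence_number_def
    using fin ne bound by (subst Max_le_iff) auto
qed

end
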